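(* For every integer $i \geq 0$, there is no bipartite graph $G$ whose independence complex $I(G)$ is homotopy equivalent to the wedge $S^i \vee S^0$.
   Context: For a simple graph $G$, the independence complex $I(G)$ is the simplicial complex on the vertices of $G$ whose simplices are the nonempty sets of pairwise non-adjacent vertices. $S^i \vee S^0$ denotes the one-point union of the $i$-sphere and the $0$-sphere (two points). *)

theory Defs
  imports "HOL-Analysis.Analysis"
begin

definition simple_graph :: "'a set \<Rightarrow> ('a \<Rightarrow> 'a \<Rightarrow> bool) \<Rightarrow> bool" where
  "simple_graph V E \<longleftrightarrow> finite V \<and> (\<forall>x y. E x y \<longrightarrow> x \<in> V \<and> y \<in> V)
      \<and> (\<forall>x. \<not> E x x) \<and> (\<forall>x y. E x y \<longrightarrow> E y x)"

definition bipartite :: "'a set \<Rightarrow> ('a \<Rightarrow> 'a \<Rightarrow> bool) \<Rightarrow> bool" where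
  "bipartite V E \<longleftrightarrow> (\<exists>A B. A \<union> B = V \<and> A \<inter> B = {}
      \<and> (\<forall>x\<in>A. \<forall>y\<in>A. \<not> E x y) \<and> (\<forall>x\<in>B. \<forall>y\<in>B. \<not> E x y))"

definition independent_set :: "'a set \<Rightarrow> ('a \<Rightarrow> 'a \<Rightarrow> bool) \<Rightarrow> 'a set \<Rightarrow> bool" where
  "independent_set V E S \<longleftrightarrow> S \<subseteq> V \<and> (\<forall>x\<in>S. \<forall>y\<in>S. \<not> E x y)"

definition indep_complex :: "'a set \<Rightarrow> ('a \<Rightarrow> 'a \<Rightarrow> bool) \<Rightarrow> 'a set set" where
  "indep_complex V E = {S. S \<noteq> {} \<and> independent_set V E S}"

definition geom_realization :: "'a set \<Rightarrow> 'a set set \<Rightarrow> ('a \<Rightarrow> real) topology" where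
  "geom_realization V K = subtopology (powertop_real UNIV)
     {f. (\<forall>x. 0 \<le> f x) \<and> (\<forall>x. x \<notin> V \<longrightarrow> f x = 0) \<and> sum f V = 1
         \<and> {x\<in>V. 0 < f x} \<in> K}"

text \<open>The wedge S^i v S^0, realised literally in R^(i+1): the unit i-sphere together
  with the 0-sphere {e0, 3 e0} (centre 2 e0, radius 1), which meets it exactly in e0.\<close>
definition wedge_sphere_S0 :: "nat \<Rightarrow> (nat \<Rightarrow> real) topology" where
  "wedge_sphere_S0 i = subtopology (powertop_real UNIV)
     (topspace (nsphere i) \<union> {(\<lambda>j. if j = 0 then 1 else 0), (\<lambda>j. if j = 0 then 3 else 0)})"

end

theory Submission
  imports Defs "HOL-Homology.Homology"
begin

lemma pc_sep:
  assumes "path_component_of X x y" "continuous_map X euclideanreal q" "q x < c" "c < q y"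
  shows "\<exists>z\<in>topspace X. q z = c"
proof -
  obtain g where g: "pathin X g" "g 0 = x" "g 1 = y"
    using assms(1) unfolding path_component_of_def by blast
  have "continuous_map (subtopology euclideanreal {0..1}) euclideanreal (q \<circ> g)"
    using g(1) assms(2) unfolding pathin_def by (rule continuous_map_compose)
  hence "continuous_on {0..1} (q \<circ> g)" by (simp add: continuous_map_iff_continuous)
  then obtain t where t: "0 \<le> t" "t \<le> 1" "(q \<circ> g) t = c"
    using IVT'[of "q \<circ> g" 0 c 1] assms g by force
  have "g t \<in> topspace X" using g(1) t unfolding pathin_def
    by (auto simp: continuous_map_def)
  thus ?thesis using t by auto
qed

lemma homotopic_pc:
  assumes "homotopic_with P X Y f g" "x \<in> topspace X"
  shows "path_component_of Y (f x) (g x)"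
proof -
  obtain h where h: "continuous_map (prod_topology (subtopology euclideanreal {0..1}) X) Y h"
    "\<forall>x. h(0,x) = f x" "\<forall>x. h(1,x) = g x"
    using assms(1) unfolding homotopic_with_def by blast
  have "continuous_map (subtopology euclideanreal {0..1}) (prod_topology (subtopology euclideanreal {0..1}) X) (\<lambda>t. (t,x))"
    using assms(2) by (intro continuous_intros) auto
  hence "pathin Y (h \<circ> (\<lambda>t. (t,x)))" unfolding pathin_def using h(1) by (rule continuous_map_compose)
  thus ?thesis unfolding path_component_of_def using h by force
qed

lemma topspace_wedge:
  "topspace (wedge_sphere_S0 i) = topspace (nsphere i) \<union> {(\<lambda>j. if j = 0 then 1 else 0), (\<lambda>j. if j = 0 then 3 else 0)}"
  unfolding wedge_sphere_S0_def by simp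

lemma subtopology_wedge:
  "subtopology (wedge_sphere_S0 i) (topspace (nsphere i)) = nsphere i"
proof -
  have "nsphere i = subtopology (powertop_real UNIV) (topspace (nsphere i))"
    by (simp add: nsphere)
  moreover have "(topspace (nsphere i) \<union> {(\<lambda>j. if j = 0 then 1 else 0), (\<lambda>j. if j = 0 then 3 else 0)}) \<inter> topspace (nsphere i) = topspace (nsphere i)"
    by blast
  ultimately show ?thesis unfolding wedge_sphere_S0_def subtopology_subtopology
    by simp
qed

lemma cm_wedge0: "continuous_map (wedge_sphere_S0 i) euclideanreal (\<lambda>x. x 0)"
  unfolding wedge_sphere_S0_def
  by (blast intro: continuous_map_from_subtopology [OF continuous_map_product_projection])

lemma sphere_coord_bound:
  assumes "x \<in> topspace (nsphere i)"
  shows "(x 0)^2 \<le> 1"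
proof -
  have "(\<Sum>j\<le>i. (x j)^2) = 1" using assms by (simp add: nsphere)
  moreover have "(x 0)^2 \<le> (\<Sum>j\<le>i. (x j)^2)"
    by (rule member_le_sum) auto
  ultimately show ?thesis by simp
qed

lemma sphere_coord_le1:
  assumes "x \<in> topspace (nsphere i)"
  shows "x 0 \<le> 1" "-1 \<le> x 0"
proof -
  have "\<bar>x 0\<bar> \<le> 1" using sphere_coord_bound[OF assms] by (simp add: abs_square_le_1)
  thus "x 0 \<le> 1" "-1 \<le> x 0" by auto
qed

lemma sphere0_coord:
  assumes "x \<in> topspace (nsphere 0)"
  shows "x 0 = 1 \<or> x 0 = -1"
proof -
  have "(x 0)^2 = 1" using assms by (simp add: nsphere)
  thus ?thesis by (simp add: power2_eq_1_iff)
qed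

lemma sphere0_minus: "(\<lambda>j. if j = 0 then -1 else 0::real) \<in> topspace (nsphere 0)"
  by (simp add: nsphere)

lemma nsphere_eq: "nsphere i = subtopology (powertop_real UNIV) (topspace (nsphere i))"
  by (simp add: nsphere)

lemma cm_into_nsphere:
  assumes "continuous_map X (powertop_real UNIV) f" "f \<in> topspace X \<rightarrow> topspace (nsphere i)"
  shows "continuous_map X (nsphere i) f"
proof -
  have "continuous_map X (subtopology (powertop_real UNIV) (topspace (nsphere i))) f"
    using assms by (simp add: continuous_map_in_subtopology)
  then show ?thesis by (subst nsphere_eq)
qed

lemma wedge_retract:
  "continuous_map (wedge_sphere_S0 i) (nsphere i) (\<lambda>x j. if j = 0 then min (x 0) 1 else x j)"
proof -
  have "continuous_map (wedge_sphere_S0 i) (powertop_real UNIV) (\<lambda>x j. if j = 0 then min (x 0) 1 else x j)"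
    unfolding continuous_map_componentwise_UNIV
  proof
    fix k
    show "continuous_map (wedge_sphere_S0 i) euclideanreal (\<lambda>x. if k = 0 then min (x 0) 1 else x k)"
      unfolding wedge_sphere_S0_def
      by (cases "k = 0") (auto intro!: continuous_intros continuous_map_from_subtopology continuous_map_product_projection)
  qed
  moreover have "(\<lambda>x j. if j = 0 then min (x 0) 1 else x j) x \<in> topspace (nsphere i)"
    if xW: "x \<in> topspace (wedge_sphere_S0 i)" for x
  proof -
    consider "x \<in> topspace (nsphere i)" | "x = (\<lambda>j. if j = 0 then 3 else 0)" | "x = (\<lambda>j. if j = 0 then 1 else 0)"
      using xW unfolding topspace_wedge by blast
    then show ?thesis
    proof cases
      case 1
      then have "(\<lambda>j. if j = 0 then min (x 0) 1 else x j) = x"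
        using sphere_coord_le1(1)[OF 1] by (auto simp: min_def)
      then show ?thesis using 1 by simp
    next
      case 2
      then have "(\<lambda>j. if j = 0 then min (x 0) 1 else x j) = (\<lambda>j. if j = 0 then 1 else 0)" by auto
      then show ?thesis using in_topspace_nsphere by metis
    next
      case 3
      then have "(\<lambda>j. if j = 0 then min (x 0) 1 else x j) = (\<lambda>j. if j = 0 then 1 else 0)" by auto
      then show ?thesis using in_topspace_nsphere by metis
    qed
  qed
  ultimately show ?thesis
    by (intro cm_into_nsphere) auto
qed

lemma sphere_pc:
  assumes "1 \<le> i" "x \<in> topspace (nsphere i)"
  shows "path_component_of (nsphere i) x (\<lambda>j. if j = 1 then 1 else 0)"
proof -
  let ?e = "(\<lambda>j. if j = 1 then 1 else 0) :: nat \<Rightarrow> real"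
  have e: "?e \<in> topspace (nsphere i)"
    using assms(1) by (simp add: nsphere power2_eq_square if_distrib [where f = "\<lambda>x. x * _"] cong: if_cong)
  have "path_component_of (subtopology (nsphere i) {x. x 0 \<ge> 0}) x ?e \<or>
        path_component_of (subtopology (nsphere i) {x. x 0 \<le> 0}) x ?e"
  proof (cases "x 0 \<ge> 0")
    case True
    have "path_connected_space (subtopology (nsphere i) {x. x 0 \<ge> 0})"
      by (rule contractible_imp_path_connected_space[OF contractible_space_upper_hemisphere]) simp
    moreover have "x \<in> topspace (subtopology (nsphere i) {x. x 0 \<ge> 0})" using True assms by simp
    moreover have "?e \<in> topspace (subtopology (nsphere i) {x. x 0 \<ge> 0})" using e by simp
    ultimately show ?thesis
      unfolding path_connected_space_iff_path_component by blast
  next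
    case False
    have "path_connected_space (subtopology (nsphere i) {x. x 0 \<le> 0})"
      by (rule contractible_imp_path_connected_space[OF contractible_space_lower_hemisphere]) simp
    moreover have "x \<in> topspace (subtopology (nsphere i) {x. x 0 \<le> 0})" using False assms by simp
    moreover have "?e \<in> topspace (subtopology (nsphere i) {x. x 0 \<le> 0})" using e by simp
    ultimately show ?thesis
      unfolding path_connected_space_iff_path_component by blast
  qed
  then show ?thesis
    using path_component_of_mono[OF _ subset_UNIV, of "nsphere i"] by (metis subtopology_UNIV)
qed


lemma transfer_pc:
  assumes g: "continuous_map Y W g" and H: "homotopic_with (\<lambda>x. True) W W (g \<circ> f) id"
    and w: "w1 \<in> topspace W" "w2 \<in> topspace W" and pc: "path_component_of Y (f w1) (f w2)"
  shows "path_component_of W w1 w2"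
proof -
  have 1: "path_component_of W (g (f w1)) (g (f w2))"
    by (rule path_component_of_continuous_image[OF g pc])
  have 2: "path_component_of W (g (f w)) w" if "w \<in> topspace W" for w
    using homotopic_pc[OF H that] by simp
  show ?thesis
    by (meson 1 2 w path_component_of_sym path_component_of_trans)
qed

lemma wedge_sep:
  assumes "path_component_of (wedge_sphere_S0 i) x y" "x 0 < c" "c < y 0"
    "\<forall>z\<in>topspace (wedge_sphere_S0 i). z 0 \<noteq> c"
  shows False
proof -
  have "\<exists>z\<in>topspace (wedge_sphere_S0 i). z 0 = c"
    by (rule pc_sep[where q="\<lambda>x. x 0", OF assms(1) cm_wedge0]) (use assms in auto)
  then show False using assms(4) by blast
qed

lemma wedge_no2: "\<forall>z\<in>topspace (wedge_sphere_S0 i). z 0 \<noteq> (2::real)"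
proof
  fix z assume "z \<in> topspace (wedge_sphere_S0 i)"
  then consider "z \<in> topspace (nsphere i)" | "z = (\<lambda>j. if j = 0 then 3 else 0)" | "z = (\<lambda>j. if j = 0 then 1 else 0)"
    unfolding topspace_wedge by blast
  then show "z 0 \<noteq> 2"
  proof cases
    case 1 then show ?thesis using sphere_coord_le1(1)[OF 1] by linarith
  qed simp_all
qed

lemma wedge_no0: "\<forall>z\<in>topspace (wedge_sphere_S0 0). z 0 \<noteq> (0::real)"
proof
  fix z assume "z \<in> topspace (wedge_sphere_S0 0)"
  then consider "z \<in> topspace (nsphere 0)" | "z = (\<lambda>j. if j = 0 then 3 else 0)" | "z = (\<lambda>j. if j = 0 then 1 else 0)"
    unfolding topspace_wedge by blast
  then show "z 0 \<noteq> 0"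
  proof cases
    case 1 then show ?thesis using sphere0_coord[OF 1] by linarith
  qed simp_all
qed

lemma e_in_wedge: "(\<lambda>j. if j = 0 then 1 else 0) \<in> topspace (wedge_sphere_S0 i)"
  unfolding topspace_wedge by blast

lemma p_in_wedge: "(\<lambda>j. if j = 0 then 3 else 0) \<in> topspace (wedge_sphere_S0 i)"
  unfolding topspace_wedge by blast

lemma obtain_equiv:
  assumes "Y homotopy_equivalent_space W"
  obtains f g where "continuous_map W Y f" "continuous_map Y W g" "homotopic_with (\<lambda>x. True) W W (g \<circ> f) id"
  using assms unfolding homotopy_equivalent_space_def by blast

lemma not_equiv_pc:
  assumes "\<forall>y1\<in>topspace Y. \<forall>y2\<in>topspace Y. path_component_of Y y1 y2"
  shows "\<not> Y homotopy_equivalent_space wedge_sphere_S0 i"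
proof
  assume "Y homotopy_equivalent_space wedge_sphere_S0 i"
  then obtain f g where f: "continuous_map (wedge_sphere_S0 i) Y f" and g: "continuous_map Y (wedge_sphere_S0 i) g"
    and H: "homotopic_with (\<lambda>x. True) (wedge_sphere_S0 i) (wedge_sphere_S0 i) (g \<circ> f) id"
    by (rule obtain_equiv)
  let ?e = "(\<lambda>j. if j = 0 then 1 else 0) :: nat \<Rightarrow> real"
  let ?p = "(\<lambda>j. if j = 0 then 3 else 0) :: nat \<Rightarrow> real"
  have "f ?e \<in> topspace Y" "f ?p \<in> topspace Y"
    using f e_in_wedge p_in_wedge by (auto simp: continuous_map_def)
  then have "path_component_of Y (f ?e) (f ?p)" using assms by blast
  then have "path_component_of (wedge_sphere_S0 i) ?e ?p"
    by (rule transfer_pc[OF g H e_in_wedge p_in_wedge])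
  then show False
    by (rule wedge_sep[where c=2]) (use wedge_no2 in auto)
qed


lemma split_pc:
  assumes q01: "\<forall>y\<in>topspace Y. q y = 0 \<or> q y = 1"
    and c0: "contractible_space (subtopology Y {y. q y = 0})"
    and c1: "contractible_space (subtopology Y {y. q y = 1})"
    and y: "y1 \<in> topspace Y" "y2 \<in> topspace Y" "q y1 = q y2"
  shows "path_component_of Y y1 y2"
proof -
  let ?Z = "{y. q y = q y1}"
  have "contractible_space (subtopology Y ?Z)" using q01 y c0 c1 by metis
  then have "path_connected_space (subtopology Y ?Z)" by (rule contractible_imp_path_connected_space)
  then have "path_component_of (subtopology Y ?Z) y1 y2"
    using y unfolding path_connected_space_iff_path_component by simp
  then show ?thesis
    using path_component_of_mono[OF _ subset_UNIV] by (metis subtopology_UNIV)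
qed

lemma pc_q_eq:
  assumes q: "continuous_map Y euclideanreal q" and q01: "\<forall>y\<in>topspace Y. q y = 0 \<or> q y = 1"
    and pc: "path_component_of Y y1 y2"
  shows "q y1 = q y2"
proof (rule ccontr)
  assume ne: "q y1 \<noteq> q y2"
  have y: "y1 \<in> topspace Y" "y2 \<in> topspace Y"
    using pc path_component_of_equiv by fastforce+
  have "\<exists>z\<in>topspace Y. q z = 1/2"
  proof (cases "q y1 = 0")
    case True
    then have "q y2 = 1" using ne q01 y by metis
    then show ?thesis using pc_sep[OF pc q, of "1/2"] True by simp
  next
    case False
    then have "q y1 = 1" "q y2 = 0" using ne q01 y by metis+
    then show ?thesis using pc_sep[OF path_component_of_sym[OF pc] q, of "1/2"] by simp
  qed
  then show False using q01 by fastforce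
qed

lemma not_equiv_split:
  assumes q: "continuous_map Y euclideanreal q" and q01: "\<forall>y\<in>topspace Y. q y = 0 \<or> q y = 1"
    and c0: "contractible_space (subtopology Y {y. q y = 0})"
    and c1: "contractible_space (subtopology Y {y. q y = 1})"
  shows "\<not> Y homotopy_equivalent_space wedge_sphere_S0 i"
proof
  assume "Y homotopy_equivalent_space wedge_sphere_S0 i"
  then obtain f g where f: "continuous_map (wedge_sphere_S0 i) Y f" and g: "continuous_map Y (wedge_sphere_S0 i) g"
    and H: "homotopic_with (\<lambda>x. True) (wedge_sphere_S0 i) (wedge_sphere_S0 i) (g \<circ> f) id"
    by (rule obtain_equiv)
  let ?W = "wedge_sphere_S0 i"
  let ?e = "(\<lambda>j. if j = 0 then 1 else 0) :: nat \<Rightarrow> real"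
  let ?p = "(\<lambda>j. if j = 0 then 3 else 0) :: nat \<Rightarrow> real"
  have fW: "f w \<in> topspace Y" if "w \<in> topspace ?W" for w
    using f that by (auto simp: continuous_map_def)
  have tr: "path_component_of ?W w1 w2"
    if "w1 \<in> topspace ?W" "w2 \<in> topspace ?W" "q (f w1) = q (f w2)" for w1 w2
    using transfer_pc[OF g H that(1,2)] split_pc[OF q01 c0 c1 fW[OF that(1)] fW[OF that(2)] that(3)] by blast
  show False
  proof (cases "i = 0")
    case True
    let ?m = "(\<lambda>j. if j = 0 then -1 else 0) :: nat \<Rightarrow> real"
    have m: "?m \<in> topspace ?W" using True sphere0_minus unfolding topspace_wedge by blast
    have e: "?e \<in> topspace ?W" and p: "?p \<in> topspace ?W" by (rule e_in_wedge p_in_wedge)+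
    have n1: "\<not> path_component_of ?W ?m ?e"
      using wedge_sep[where c=0 and i=i] wedge_no0 True by fastforce
    have n2: "\<not> path_component_of ?W ?e ?p"
      using wedge_sep[where c=2 and i=i] wedge_no2 by fastforce
    have n3: "\<not> path_component_of ?W ?m ?p"
      using wedge_sep[where c=2 and i=i] wedge_no2 by fastforce
    have "q (f ?m) = q (f ?e) \<or> q (f ?e) = q (f ?p) \<or> q (f ?m) = q (f ?p)"
      using q01 fW[OF m] fW[OF e] fW[OF p] by metis
    then show False using tr[OF m e] tr[OF e p] tr[OF m p] n1 n2 n3 by blast
  next
    case False
    let ?S = "topspace (nsphere i)"
    let ?e1 = "(\<lambda>j. if j = 1 then 1 else 0) :: nat \<Rightarrow> real"
    have SW: "?S \<subseteq> topspace ?W" unfolding topspace_wedge by blast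
    have eS: "?e \<in> ?S" by (rule in_topspace_nsphere)
    have pcS: "path_component_of ?W s ?e" if "s \<in> ?S" for s
    proof -
      have "path_component_of (nsphere i) s ?e"
        using sphere_pc[OF _ that] sphere_pc[OF _ eS] False
        by (meson less_one not_less path_component_of_sym path_component_of_trans)
      then have "path_component_of (subtopology ?W ?S) s ?e" by (simp add: subtopology_wedge)
      then show ?thesis using path_component_of_mono[OF _ subset_UNIV] by (metis subtopology_UNIV)
    qed
    define k where "k = q (f ?e)"
    have fS: "f s \<in> topspace Y \<inter> {y. q y = k}" if "s \<in> ?S" for s
    proof -
      have "path_component_of Y (f s) (f ?e)"
        by (rule path_component_of_continuous_image[OF f pcS[OF that]])
      then show ?thesis using pc_q_eq[OF q q01] fW SW that k_def by auto
    qed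
    have cZ: "contractible_space (subtopology Y {y. q y = k})"
      using c0 c1 q01 fW[OF e_in_wedge] k_def by metis
    have fc: "continuous_map (nsphere i) (subtopology Y {y. q y = k}) f"
    proof -
      have "continuous_map (subtopology ?W ?S) Y f" by (rule continuous_map_from_subtopology[OF f])
      then have "continuous_map (nsphere i) Y f" by (simp add: subtopology_wedge)
      then show ?thesis using fS by (auto simp: continuous_map_in_subtopology)
    qed
    obtain c where hc: "homotopic_with (\<lambda>h. True) (nsphere i) (subtopology Y {y. q y = k}) f (\<lambda>x. c)"
      using nullhomotopic_into_contractible_space[OF fc cZ] by blast
    have "homotopic_with (\<lambda>h. True) (nsphere i) Y (id \<circ> f) (id \<circ> (\<lambda>x. c))"
      by (rule homotopic_with_compose_continuous_map_left[OF hc continuous_map_id_subt]) simp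
    then have h1: "homotopic_with (\<lambda>h. True) (nsphere i) Y f (\<lambda>x. c)" by (simp add: o_def)
    have h2: "homotopic_with (\<lambda>h. True) (nsphere i) ?W (g \<circ> f) (g \<circ> (\<lambda>x. c))"
      by (rule homotopic_with_compose_continuous_map_left[OF h1 g]) simp
    have h3: "homotopic_with (\<lambda>h. True) (nsphere i) ?W (g \<circ> f) id"
      using homotopic_from_subtopology[OF H, of ?S] by (simp add: subtopology_wedge)
    have h4: "homotopic_with (\<lambda>h. True) (nsphere i) ?W id (g \<circ> (\<lambda>x. c))"
      using homotopic_with_trans[OF homotopic_with_symD[OF h3] h2] .
    let ?r = "\<lambda>x j. if j = 0 then min (x 0) 1 else x j"
    have h5: "homotopic_with (\<lambda>h. True) (nsphere i) (nsphere i) (?r \<circ> id) (?r \<circ> (g \<circ> (\<lambda>x. c)))"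
      by (rule homotopic_with_compose_continuous_map_left[OF h4 wedge_retract]) simp
    have h6: "homotopic_with (\<lambda>h. True) (nsphere i) (nsphere i) id (\<lambda>x. ?r (g c))"
    proof (rule homotopic_with_eq[OF h5])
      fix x assume "x \<in> topspace (nsphere i)"
      then have "x 0 \<le> 1" by (rule sphere_coord_le1)
      then show "id x = (?r \<circ> id) x" by (auto simp: min_def)
    qed auto
    then have "contractible_space (nsphere i)" unfolding contractible_space_def by blast
    then show False using non_contractible_space_nsphere by blast
  qed
qed


lemma topspace_geom:
  "topspace (geom_realization V (indep_complex V E)) =
   {f. (\<forall>x. 0 \<le> f x) \<and> (\<forall>x. x \<notin> V \<longrightarrow> f x = 0) \<and> sum f V = 1 \<and> {x\<in>V. 0 < f x} \<in> indep_complex V E}"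
  by (simp add: geom_realization_def)

lemma geom_sub:
  "geom_realization V (indep_complex V E) = subtopology (powertop_real UNIV) (topspace (geom_realization V (indep_complex V E)))"
  unfolding topspace_geom by (simp add: geom_realization_def)

lemma memI:
  assumes "finite V" "\<forall>x. 0 \<le> h x" "\<forall>x. x \<notin> V \<longrightarrow> h x = 0" "sum h V = 1"
    "C \<subseteq> V" "\<forall>x\<in>C. \<forall>y\<in>C. \<not> E x y" "{x\<in>V. 0 < h x} \<subseteq> C"
  shows "h \<in> topspace (geom_realization V (indep_complex V E))"
proof -
  have "{x\<in>V. 0 < h x} \<noteq> {}"
  proof
    assume "{x\<in>V. 0 < h x} = {}"
    then have "\<forall>x\<in>V. h x = 0" using assms(2) by (metis (mono_tags, lifting) empty_iff less_eq_real_def mem_Collect_eq)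
    then have "sum h V = 0" by simp
    then show False using assms(4) by simp
  qed
  moreover have "independent_set V E {x\<in>V. 0 < h x}"
    unfolding independent_set_def using assms(7,6) by blast
  ultimately show ?thesis using assms unfolding topspace_geom unfolding indep_complex_def by auto
qed

lemma supp_ne:
  assumes "h \<in> topspace (geom_realization V (indep_complex V E))"
  shows "{x\<in>V. 0 < h x} \<noteq> {}" "independent_set V E {x\<in>V. 0 < h x}"
  using assms unfolding topspace_geom unfolding indep_complex_def by auto

lemma seg_mem:
  assumes V: "finite V" and h1: "h1 \<in> topspace (geom_realization V (indep_complex V E))"
    and h2: "h2 \<in> topspace (geom_realization V (indep_complex V E))"
    and C: "C \<subseteq> V" "\<forall>x\<in>C. \<forall>y\<in>C. \<not> E x y"
    and s1: "{x\<in>V. 0 < h1 x} \<subseteq> C" and s2: "{x\<in>V. 0 < h2 x} \<subseteq> C"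
    and t: "0 \<le> t" "t \<le> 1"
  shows "(\<lambda>x. (1 - t) * h1 x + t * h2 x) \<in> topspace (geom_realization V (indep_complex V E))"
    "{x\<in>V. 0 < (1 - t) * h1 x + t * h2 x} \<subseteq> C"
proof -
  let ?g = "\<lambda>x. (1 - t) * h1 x + t * h2 x"
  have p1: "\<forall>x. 0 \<le> h1 x" "\<forall>x. x \<notin> V \<longrightarrow> h1 x = 0" "sum h1 V = 1"
    using h1 unfolding topspace_geom by auto
  have p2: "\<forall>x. 0 \<le> h2 x" "\<forall>x. x \<notin> V \<longrightarrow> h2 x = 0" "sum h2 V = 1"
    using h2 unfolding topspace_geom by auto
  show sub: "{x\<in>V. 0 < ?g x} \<subseteq> C"
  proof
    fix x assume "x \<in> {x\<in>V. 0 < ?g x}"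
    then have x: "x \<in> V" "0 < ?g x" by auto
    have "0 < h1 x \<or> 0 < h2 x"
    proof (rule ccontr)
      assume "\<not> (0 < h1 x \<or> 0 < h2 x)"
      then have "h1 x \<le> 0" "h2 x \<le> 0" by auto
      then have "(1 - t) * h1 x \<le> 0" "t * h2 x \<le> 0" using t
        by (simp_all add: mult_nonneg_nonpos)
      then show False using x(2) by linarith
    qed
    then show "x \<in> C" using s1 s2 x(1) by blast
  qed
  show "?g \<in> topspace (geom_realization V (indep_complex V E))"
  proof (rule memI[OF V _ _ _ C sub])
    show "\<forall>x. 0 \<le> ?g x"
    proof
      fix x
      have "0 \<le> (1 - t) * h1 x" using p1 t by simp
      moreover have "0 \<le> t * h2 x" using p2 t by simp
      ultimately show "0 \<le> ?g x" by linarith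
    qed
    show "\<forall>x. x \<notin> V \<longrightarrow> ?g x = 0" using p1(2) p2(2) by simp
    have "sum ?g V = sum (\<lambda>x. (1 - t) * h1 x) V + sum (\<lambda>x. t * h2 x) V"
      by (rule sum.distrib)
    also have "\<dots> = (1 - t) * sum h1 V + t * sum h2 V"
      by (simp only: sum_distrib_left)
    also have "\<dots> = 1" using p1(3) p2(3) by simp
    finally show "sum ?g V = 1" .
  qed
qed

lemma line_pc:
  assumes V: "finite V" and h1: "h1 \<in> topspace (geom_realization V (indep_complex V E))"
    and h2: "h2 \<in> topspace (geom_realization V (indep_complex V E))"
    and C: "C \<subseteq> V" "\<forall>x\<in>C. \<forall>y\<in>C. \<not> E x y"
    and s1: "{x\<in>V. 0 < h1 x} \<subseteq> C" and s2: "{x\<in>V. 0 < h2 x} \<subseteq> C"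
  shows "path_component_of (geom_realization V (indep_complex V E)) h1 h2"
proof -
  let ?Y = "geom_realization V (indep_complex V E)"
  let ?g = "\<lambda>t x. (1 - t) * h1 x + t * h2 x"
  have p1: "\<forall>x. 0 \<le> h1 x" "\<forall>x. x \<notin> V \<longrightarrow> h1 x = 0" "sum h1 V = 1"
    using h1 unfolding topspace_geom by auto
  have p2: "\<forall>x. 0 \<le> h2 x" "\<forall>x. x \<notin> V \<longrightarrow> h2 x = 0" "sum h2 V = 1"
    using h2 unfolding topspace_geom by auto
  have mem: "?g t \<in> topspace ?Y" if t: "0 \<le> t" "t \<le> 1" for t
    by (rule seg_mem(1)[OF V h1 h2 C s1 s2 t])
  have cont: "continuous_map (subtopology euclideanreal {0..1}) (powertop_real UNIV) ?g"
    unfolding continuous_map_componentwise_UNIV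
    by (simp add: continuous_map_iff_continuous continuous_intros)
  have "continuous_map (subtopology euclideanreal {0..1}) (subtopology (powertop_real UNIV) (topspace ?Y)) ?g"
    unfolding continuous_map_in_subtopology
  proof (rule conjI[OF cont], rule Pi_I)
    fix t assume "t \<in> topspace (subtopology euclideanreal {0..1})"
    then have "0 \<le> t" "t \<le> 1" by auto
    then show "?g t \<in> topspace ?Y" by (rule mem)
  qed
  then have "pathin ?Y ?g"
    unfolding pathin_def by (subst geom_sub)
  moreover have "?g 0 = h1" "?g 1 = h2" by (simp_all add: fun_eq_iff)
  ultimately show ?thesis unfolding path_component_of_def by blast
qed


lemma delta_mem:
  assumes V: "finite V" "v \<in> V" and nE: "\<not> E v v"
  shows "(\<lambda>x. if x = v then 1 else 0 :: real) \<in> topspace (geom_realization V (indep_complex V E))"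
    "{x\<in>V. 0 < (if x = v then 1 else 0 :: real)} = {v}"
proof -
  show sup: "{x\<in>V. 0 < (if x = v then 1 else 0 :: real)} = {v}" using V by auto
  show "(\<lambda>x. if x = v then 1 else 0 :: real) \<in> topspace (geom_realization V (indep_complex V E))"
    by (rule memI[where C="{v}"]) (use V nE sup in auto)
qed

lemma contr_part:
  assumes V: "finite V" and C: "C \<subseteq> V" "\<forall>x\<in>C. \<forall>y\<in>C. \<not> E x y"
  shows "contractible_space (subtopology (geom_realization V (indep_complex V E)) {h. {x\<in>V. 0 < h x} \<subseteq> C})"
proof -
  let ?Y = "geom_realization V (indep_complex V E)"
  let ?S = "{h. {x\<in>V. 0 < h x} \<subseteq> C}"
  define Z where "Z = topspace ?Y \<inter> ?S"
  have "subtopology ?Y ?S = subtopology (subtopology (powertop_real UNIV) (topspace ?Y)) ?S"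
    by (rule arg_cong[where f="\<lambda>X. subtopology X ?S", OF geom_sub])
  then have eq: "subtopology ?Y ?S = subtopology (powertop_real UNIV) Z"
    by (simp add: subtopology_subtopology Z_def)
  show ?thesis
  proof (cases "Z = {}")
    case True
    then show ?thesis unfolding eq by simp
  next
    case False
    then obtain h0 where h0: "h0 \<in> Z" by blast
    then obtain v where v: "v \<in> V" "0 < h0 v" using supp_ne(1)[of h0 V E] unfolding Z_def by blast
    then have vC: "v \<in> C" using h0 unfolding Z_def by blast
    let ?d = "\<lambda>x. if x = v then 1 else 0 :: real"
    have dY: "?d \<in> topspace ?Y" and ds: "{x\<in>V. 0 < ?d x} = {v}"
      using delta_mem[OF V v(1), of E] C vC by auto
    let ?X = "subtopology (powertop_real UNIV) Z"
    let ?I = "subtopology euclideanreal {0..1}"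
    define H where "H = (\<lambda>p x. (1 - fst p) * snd p x + fst p * ?d x)"
    have fstc: "continuous_map (prod_topology ?I ?X) euclideanreal fst"
      using continuous_map_fst[of ?I ?X] by (simp add: continuous_map_in_subtopology)
    have sndc: "continuous_map (prod_topology ?I ?X) euclideanreal (\<lambda>p. snd p x)" for x
    proof -
      have "continuous_map ?X euclideanreal (\<lambda>h. h x)"
        by (rule continuous_map_from_subtopology[OF continuous_map_product_projection]) simp
      from continuous_map_compose[OF continuous_map_snd this] show ?thesis by (simp add: o_def)
    qed
    have cH: "continuous_map (prod_topology ?I ?X) (powertop_real UNIV) H"
      unfolding continuous_map_componentwise_UNIV H_def
      by (intro allI continuous_intros fstc sndc)
    have mH: "H p \<in> Z" if pin: "p \<in> topspace (prod_topology ?I ?X)" for p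
    proof -
      obtain t h where p: "p = (t, h)" "0 \<le> t" "t \<le> 1" "h \<in> Z" using pin by auto
      have hY: "h \<in> topspace ?Y" and hs: "{x\<in>V. 0 < h x} \<subseteq> C" using p(4) unfolding Z_def by auto
      have "{x\<in>V. 0 < ?d x} \<subseteq> C" using ds vC by simp
      note sm = seg_mem[OF V hY dY C hs this p(2,3)]
      show ?thesis unfolding Z_def H_def p using sm by simp
    qed
    have "continuous_map (prod_topology ?I ?X) ?X H"
      using cH mH by (simp add: continuous_map_in_subtopology Pi_iff)
    moreover have "\<forall>h. H (0, h) = id h" "\<forall>h. H (1, h) = ?d" by (simp_all add: H_def fun_eq_iff)
    ultimately have "homotopic_with (\<lambda>x. True) ?X ?X id (\<lambda>h. ?d)"
      unfolding homotopic_with_def by blast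
    then show ?thesis unfolding eq contractible_space_def by blast
  qed
qed


lemma realization_cases:
  assumes G: "simple_graph V E" and B: "bipartite V E"
  shows "(\<forall>y1\<in>topspace (geom_realization V (indep_complex V E)). \<forall>y2\<in>topspace (geom_realization V (indep_complex V E)).
            path_component_of (geom_realization V (indep_complex V E)) y1 y2)
     \<or> (\<exists>q. continuous_map (geom_realization V (indep_complex V E)) euclideanreal q
          \<and> (\<forall>y\<in>topspace (geom_realization V (indep_complex V E)). q y = 0 \<or> q y = 1)
          \<and> contractible_space (subtopology (geom_realization V (indep_complex V E)) {y. q y = 0})
          \<and> contractible_space (subtopology (geom_realization V (indep_complex V E)) {y. q y = 1}))"
proof -
  let ?Y = "geom_realization V (indep_complex V E)"
  have V: "finite V" and EV: "\<And>x y. E x y \<Longrightarrow> x \<in> V \<and> y \<in> V" and irr: "\<And>x. \<not> E x x"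
    and sym: "\<And>x y. E x y \<Longrightarrow> E y x"
    using G unfolding simple_graph_def by blast+
  obtain A Bs where AB: "A \<union> Bs = V" "A \<inter> Bs = {}" and iA: "\<forall>x\<in>A. \<forall>y\<in>A. \<not> E x y"
    and iB: "\<forall>x\<in>Bs. \<forall>y\<in>Bs. \<not> E x y"
    using B unfolding bipartite_def by blast
  have AV: "A \<subseteq> V" and BV: "Bs \<subseteq> V" using AB by auto
  let ?d = "\<lambda>v x. if x = v then 1 else 0 :: real"
  have dY: "?d v \<in> topspace ?Y" and ds: "{x\<in>V. 0 < ?d v x} = {v}" if "v \<in> V" for v
    using delta_mem[OF V that, of E] irr by auto
  have supp_indep: "\<forall>x\<in>{x\<in>V. 0 < y x}. \<forall>z\<in>{x\<in>V. 0 < y x}. \<not> E x z" if "y \<in> topspace ?Y" for y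
    using supp_ne(2)[OF that] unfolding independent_set_def by blast
  have to_vertex: "path_component_of ?Y y (?d v)" if y: "y \<in> topspace ?Y" "v \<in> V" "0 < y v" for y v
    by (rule line_pc[OF V y(1) dY[OF y(2)] _ supp_indep[OF y(1)]]) (use ds[OF y(2)] y in auto)
  have edge: "path_component_of ?Y (?d u) (?d w)" if uw: "u \<in> V" "w \<in> V" "\<not> E u w" for u w
  proof (rule line_pc[OF V dY[OF uw(1)] dY[OF uw(2)], where C="{u,w}"])
    show "{u, w} \<subseteq> V" using uw by auto
    show "\<forall>x\<in>{u, w}. \<forall>y\<in>{u, w}. \<not> E x y" using uw irr sym by blast
  qed (use ds uw in auto)
  show ?thesis
  proof (cases "\<exists>a\<in>A. \<exists>b\<in>Bs. \<not> E a b")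
    case True
    then obtain a b where ab: "a \<in> A" "b \<in> Bs" "\<not> E a b" by blast
    have aV: "a \<in> V" and bV: "b \<in> V" using ab AV BV by auto
    have toa: "path_component_of ?Y y (?d a)" if y: "y \<in> topspace ?Y" for y
    proof -
      obtain v where v: "v \<in> V" "0 < y v" using supp_ne(1)[OF y] by blast
      have 1: "path_component_of ?Y y (?d v)" by (rule to_vertex[OF y v])
      show ?thesis
      proof (cases "v \<in> A")
        case True
        then have "\<not> E v a" using iA ab(1) by blast
        then have "path_component_of ?Y (?d v) (?d a)" by (rule edge[OF v(1) aV])
        with 1 show ?thesis by (rule path_component_of_trans)
      next
        case False
        then have vB: "v \<in> Bs" using v AB by blast
        then have "\<not> E v b" using iB ab(2) by blast
        then have 2: "path_component_of ?Y (?d v) (?d b)" by (rule edge[OF v(1) bV])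
        have "\<not> E b a" using ab(3) sym by blast
        then have 3: "path_component_of ?Y (?d b) (?d a)" by (rule edge[OF bV aV])
        show ?thesis by (rule path_component_of_trans[OF path_component_of_trans[OF 1 2] 3])
      qed
    qed
    have "\<forall>y1\<in>topspace ?Y. \<forall>y2\<in>topspace ?Y. path_component_of ?Y y1 y2"
    proof (intro ballI)
      fix y1 y2 assume "y1 \<in> topspace ?Y" "y2 \<in> topspace ?Y"
      then have "path_component_of ?Y y1 (?d a)" "path_component_of ?Y (?d a) y2"
        using toa path_component_of_sym by (blast, meson)
      then show "path_component_of ?Y y1 y2" by (rule path_component_of_trans)
    qed
    then show ?thesis by blast
  next
    case False
    then have allE: "\<forall>a\<in>A. \<forall>b\<in>Bs. E a b" by blast
    have finA: "finite A" and finB: "finite Bs" using V AV BV finite_subset by auto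
    let ?q = "\<lambda>h. sum h A"
    have AorB: "{x\<in>V. 0 < y x} \<subseteq> A \<or> {x\<in>V. 0 < y x} \<subseteq> Bs" if y: "y \<in> topspace ?Y" for y
    proof (rule ccontr)
      assume "\<not> ?thesis"
      then obtain a b where "a \<in> {x\<in>V. 0 < y x}" "a \<notin> Bs" "b \<in> {x\<in>V. 0 < y x}" "b \<notin> A" by blast
      then have "a \<in> A" "b \<in> Bs" "a \<in> {x\<in>V. 0 < y x}" "b \<in> {x\<in>V. 0 < y x}" using AB by auto
      then show False using allE supp_indep[OF y] by blast
    qed
    have qval: "(?q y = 1 \<longleftrightarrow> {x\<in>V. 0 < y x} \<subseteq> A) \<and> (?q y = 0 \<longleftrightarrow> {x\<in>V. 0 < y x} \<subseteq> Bs)"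
      if y: "y \<in> topspace ?Y" for y
    proof -
      have nn: "\<forall>x. 0 \<le> y x" and s1: "sum y V = 1" using y unfolding topspace_geom by auto
      have split: "sum y V = sum y A + sum y Bs"
        using sum.union_disjoint[OF finA finB AB(2), of y] AB(1) by simp
      have ne: "{x\<in>V. 0 < y x} \<noteq> {}" by (rule supp_ne(1)[OF y])
      have qA: "?q y = 1" if sA: "{x\<in>V. 0 < y x} \<subseteq> A"
      proof -
        have "\<forall>b\<in>Bs. y b = 0"
        proof
          fix b assume b: "b \<in> Bs"
          then have "\<not> 0 < y b" using sA AB BV by blast
          then show "y b = 0" using nn[rule_format, of b] by linarith
        qed
        then have "sum y Bs = 0" by simp
        then show ?thesis using split s1 by simp
      qed
      have qB: "?q y = 0" if sB: "{x\<in>V. 0 < y x} \<subseteq> Bs"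
      proof -
        have "\<forall>a\<in>A. y a = 0"
        proof
          fix a assume a: "a \<in> A"
          then have "\<not> 0 < y a" using sB AB AV by blast
          then show "y a = 0" using nn[rule_format, of a] by linarith
        qed
        then show ?thesis by simp
      qed
      have notboth: "\<not> ({x\<in>V. 0 < y x} \<subseteq> A \<and> {x\<in>V. 0 < y x} \<subseteq> Bs)" using ne AB(2) by blast
      show ?thesis
      proof (cases "{x\<in>V. 0 < y x} \<subseteq> A")
        case True
        then show ?thesis using qA notboth by simp
      next
        case False
        then have "{x\<in>V. 0 < y x} \<subseteq> Bs" using AorB[OF y] by blast
        then show ?thesis using qB False by simp
      qed
    qed
    have cq: "continuous_map ?Y euclideanreal ?q"
    proof -
      have "continuous_map ?Y euclideanreal (\<lambda>h. h a)" for a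
        unfolding geom_realization_def
        by (rule continuous_map_from_subtopology[OF continuous_map_product_projection]) simp
      then show ?thesis by (intro continuous_map_sum finA)
    qed
    have q01: "\<forall>y\<in>topspace ?Y. ?q y = 0 \<or> ?q y = 1"
    proof
      fix y assume y: "y \<in> topspace ?Y"
      show "?q y = 0 \<or> ?q y = 1" using qval[OF y] AorB[OF y] by blast
    qed
    have e1: "subtopology ?Y {y. ?q y = 1} = subtopology ?Y {h. {x\<in>V. 0 < h x} \<subseteq> A}"
    proof -
      have eq: "topspace ?Y \<inter> {y. ?q y = 1} = topspace ?Y \<inter> {h. {x\<in>V. 0 < h x} \<subseteq> A}"
      proof -
        have "h \<in> topspace ?Y \<Longrightarrow> (?q h = 1 \<longleftrightarrow> {x\<in>V. 0 < h x} \<subseteq> A)" for h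
          using qval[of h] by blast
        then show ?thesis by blast
      qed
      have "subtopology ?Y {y. ?q y = 1} = subtopology ?Y (topspace ?Y \<inter> {y. ?q y = 1})"
        by (rule subtopology_restrict[symmetric])
      also have "\<dots> = subtopology ?Y (topspace ?Y \<inter> {h. {x\<in>V. 0 < h x} \<subseteq> A})"
        by (simp only: eq)
      also have "\<dots> = subtopology ?Y {h. {x\<in>V. 0 < h x} \<subseteq> A}"
        by (rule subtopology_restrict)
      finally show ?thesis .
    qed
    have e0: "subtopology ?Y {y. ?q y = 0} = subtopology ?Y {h. {x\<in>V. 0 < h x} \<subseteq> Bs}"
    proof -
      have eq: "topspace ?Y \<inter> {y. ?q y = 0} = topspace ?Y \<inter> {h. {x\<in>V. 0 < h x} \<subseteq> Bs}"
      proof -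
        have "h \<in> topspace ?Y \<Longrightarrow> (?q h = 0 \<longleftrightarrow> {x\<in>V. 0 < h x} \<subseteq> Bs)" for h
          using qval[of h] by blast
        then show ?thesis by blast
      qed
      have "subtopology ?Y {y. ?q y = 0} = subtopology ?Y (topspace ?Y \<inter> {y. ?q y = 0})"
        by (rule subtopology_restrict[symmetric])
      also have "\<dots> = subtopology ?Y (topspace ?Y \<inter> {h. {x\<in>V. 0 < h x} \<subseteq> Bs})"
        by (simp only: eq)
      also have "\<dots> = subtopology ?Y {h. {x\<in>V. 0 < h x} \<subseteq> Bs}"
        by (rule subtopology_restrict)
      finally show ?thesis .
    qed
    have "contractible_space (subtopology ?Y {y. ?q y = 1})"
      unfolding e1 by (rule contr_part[OF V AV iA])
    moreover have "contractible_space (subtopology ?Y {y. ?q y = 0})"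
      unfolding e0 by (rule contr_part[OF V BV iB])
    ultimately show ?thesis
      by (intro disjI2 exI[of _ ?q] conjI cq q01)
  qed
qed

theorem mainTheorem5:
  fixes i :: nat and V :: "'a set" and E :: "'a \<Rightarrow> 'a \<Rightarrow> bool"
  assumes "simple_graph V E" and "bipartite V E"
  shows "\<not> (geom_realization V (indep_complex V E)) homotopy_equivalent_space (wedge_sphere_S0 i)"
proof -
  note c = realization_cases[OF assms]
  show ?thesis
  proof (cases "\<forall>y1\<in>topspace (geom_realization V (indep_complex V E)). \<forall>y2\<in>topspace (geom_realization V (indep_complex V E)).
            path_component_of (geom_realization V (indep_complex V E)) y1 y2")
    case True
    then show ?thesis by (rule not_equiv_pc)
  next
    case False
    then obtain q where q: "continuous_map (geom_realization V (indep_complex V E)) euclideanreal q"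
          "\<forall>y\<in>topspace (geom_realization V (indep_complex V E)). q y = 0 \<or> q y = 1"
          "contractible_space (subtopology (geom_realization V (indep_complex V E)) {y. q y = 0})"
          "contractible_space (subtopology (geom_realization V (indep_complex V E)) {y. q y = 1})"
      using c by blast
    show ?thesis by (rule not_equiv_split[OF q])
  qed
qed

end
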